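(* Let $\alpha,\beta\in(0,1)$, $m=\alpha n^\beta$, $c\ge2$, and $\lambda^*=1/(1-\beta)$. Then for all $\lambda<\lambda^*$ there exists $N>0$ such that for all $n>N$, $\frac{\lambda m}{\log_2 n}\le w^*(n,2^{m+c})$.
   Context: For $q\ge1$, $w^*(n,q)=\max\{w\ge0:\sum_{j=1}^w\binom{n}{j}\le q-1\}$. *)

theory Defs
  imports Complex_Main
begin

definition wstar :: "nat \<Rightarrow> real \<Rightarrow> nat" where
  "wstar n q = Max {w::nat. (\<Sum>j=1..w. real (n choose j)) \<le> q - 1}"

end

theory Submission
  imports Defs "HOL-Real_Asymp.Real_Asymp"
begin

lemma binom_bound:
  fixes n w :: nat assumes "1 \<le> w" "w \<le> n"
  shows "(\<Sum>j=1..w. real (n choose j)) \<le> exp (real w) * (real n / real w)^w"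
proof -
  define x where "x = real w / real n"
  have x0: "0 < x" and x1: "x \<le> 1" using assms by (auto simp: x_def)
  have "(\<Sum>j=1..w. real (n choose j)) \<le> (\<Sum>j=1..w. real (n choose j) * x^j / x^w)"
  proof (rule sum_mono)
    fix j assume "j \<in> {1..w}"
    hence "x^w \<le> x^j" using x0 x1 by (intro power_decreasing) auto
    hence "1 \<le> x^j / x^w" using x0 by simp
    hence "real (n choose j) * 1 \<le> real (n choose j) * (x^j / x^w)"
      by (intro mult_left_mono) auto
    thus "real (n choose j) \<le> real (n choose j) * x^j / x^w" by simp
  qed
  also have "\<dots> = (\<Sum>j=1..w. real (n choose j) * x^j) / x^w" by (simp add: sum_divide_distrib)
  also have "(\<Sum>j=1..w. real (n choose j) * x^j) \<le> (\<Sum>j\<le>n. real (n choose j) * x^j)"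
    by (rule sum_mono2) (use assms x0 in auto)
  also have "(\<Sum>j\<le>n. real (n choose j) * x^j) = (x + 1)^n"
    using binomial_ring[of x 1 n] by simp
  also have "(x+1)^n \<le> exp x ^ n" using x0 
    by (intro power_mono) (auto simp: add.commute exp_ge_add_one_self)
  also have "exp x ^ n = exp (real n * x)" by (rule exp_of_nat_mult[symmetric])
  also have "real n * x = real w" using assms by (simp add: x_def)
  finally have "(\<Sum>j=1..w. real (n choose j)) \<le> exp (real w) / x^w"
    using x0 by (simp add: divide_right_mono)
  also have "\<dots> = exp (real w) * (real n / real w)^w" using assms
    by (simp add: x_def power_divide)
  finally show ?thesis .
qed

lemma row_sum1: "(\<Sum>j=1..n. real (n choose j)) = 2^n - 1"
proof -
  have "(\<Sum>j\<le>n. real (n choose j)) = 2^n"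
    using choose_row_sum[of n] by (metis of_nat_numeral of_nat_power of_nat_sum)
  moreover have "{..n} = insert 0 {1..n}" by auto
  ultimately show ?thesis by simp
qed

lemma row_sum_ge: assumes "n \<le> v" shows "(\<Sum>j=1..v. real (n choose j)) = 2^n - 1"
proof -
  have "(\<Sum>j=1..v. real (n choose j)) = (\<Sum>j=1..n. real (n choose j))"
    using assms by (intro sum.mono_neutral_right) auto
  thus ?thesis using row_sum1 by simp
qed


lemma main_pos:
  fixes \<alpha> \<beta> c lam :: real
  assumes "0 < \<alpha>" "\<alpha> < 1" "0 < \<beta>" "\<beta> < 1" "c \<ge> 2" "0 < lam" "lam < 1 / (1 - \<beta>)"
  shows "\<exists>N::real. N > 0 \<and>
              (\<forall>n::nat. real n > N \<longrightarrow>
                 (let m = \<alpha> * real n powr \<beta> in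
                  lam * m / log 2 (real n) \<le> real (wstar n (2 powr (m + c)))))"
proof -
  define d where "d = 1 - lam * (1 - \<beta>)"
  have "lam * (1 - \<beta>) < 1" using assms by (simp add: field_simps)
  hence d0: "d > 0" by (simp add: d_def)
  define K where "K = log 2 (exp 1) - log 2 lam - log 2 \<alpha>"
  have e1: "eventually (\<lambda>x. lam*(\<alpha>*x powr \<beta>)*(ln (ln x/ln 2)/ln 2 + K)/(ln x / ln 2) + (1-\<beta>)*(ln x/ln 2) + ln (ln x/ln 2)/ln 2 + K \<le> d*(\<alpha>*x powr \<beta>) + 1) at_top"
    using assms d0 by real_asymp
  have e2: "eventually (\<lambda>x. lam*(\<alpha>*x powr \<beta>)/(ln x / ln 2) + 1 \<le> x) at_top"
    using assms by real_asymp
  have e3: "eventually (\<lambda>x. 0 \<le> (1-\<beta>)*(ln x/ln 2) + ln (ln x/ln 2)/ln 2 + K) at_top"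
    using assms by real_asymp
  have e4: "eventually (\<lambda>x. \<alpha>*x powr \<beta> + c < x) at_top"
    using assms by real_asymp
  have e5: "eventually (\<lambda>x::real. 4 \<le> x) at_top" by real_asymp
  have "eventually (\<lambda>x. (lam*(\<alpha>*x powr \<beta>)*(log 2 (log 2 x) + K)/(log 2 x) + (1-\<beta>)*(log 2 x) + log 2 (log 2 x) + K \<le> d*(\<alpha>*x powr \<beta>) + 1)
     \<and> (lam*(\<alpha>*x powr \<beta>)/(log 2 x) + 1 \<le> x) \<and> (0 \<le> (1-\<beta>)*(log 2 x) + log 2 (log 2 x) + K)
     \<and> (\<alpha>*x powr \<beta> + c < x) \<and> 4 \<le> x) at_top"
    using eventually_conj[OF e1 eventually_conj[OF e2 eventually_conj[OF e3 eventually_conj[OF e4 e5]]]]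
    by (simp add: log_def)
  then obtain N0 where N0: "\<And>x. x \<ge> N0 \<Longrightarrow> (lam*(\<alpha>*x powr \<beta>)*(log 2 (log 2 x) + K)/(log 2 x) + (1-\<beta>)*(log 2 x) + log 2 (log 2 x) + K \<le> d*(\<alpha>*x powr \<beta>) + 1)
     \<and> (lam*(\<alpha>*x powr \<beta>)/(log 2 x) + 1 \<le> x) \<and> (0 \<le> (1-\<beta>)*(log 2 x) + log 2 (log 2 x) + K)
     \<and> (\<alpha>*x powr \<beta> + c < x) \<and> 4 \<le> x"
    unfolding eventually_at_top_linorder by blast
  show ?thesis
  proof (intro exI[of _ "max N0 4"] conjI allI impI)
    show "max N0 4 > (0::real)" by simp
    fix n :: nat assume nN: "real n > max N0 4"
    define x where "x = real n"
    define m where "m = \<alpha> * x powr \<beta>"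
    define L where "L = log 2 x"
    have H: "lam*m*(log 2 L + K)/L + (1-\<beta>)*L + log 2 L + K \<le> d*m + 1"
      "lam*m/L + 1 \<le> x" "0 \<le> (1-\<beta>)*L + log 2 L + K" "m + c < x" "4 \<le> x"
      using N0[of x] nN by (auto simp: x_def m_def L_def)
    have x0: "x > 0" using H by simp
    have L2: "L \<ge> 2"
    proof -
      have "log 2 4 \<le> L" unfolding L_def using H by (subst log_le_cancel_iff) auto
      moreover have "log 2 (4::real) = 2"
        by (metis log2_of_power_eq mult_2 numeral_Bit0 of_nat_numeral power2_eq_square)
      ultimately show ?thesis by simp
    qed
    have m0: "m > 0" using assms x0 by (simp add: m_def)
    define r where "r = lam * m / L"
    have r0: "r > 0" using assms m0 L2 by (simp add: r_def)
    define w where "w = nat \<lceil>r\<rceil>"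
    have wr: "r \<le> real w" "real w \<le> r + 1" using r0 by (auto simp: w_def)
    have "real w > 0" using wr r0 by linarith
    hence w1: "1 \<le> w" by simp
    have wn: "w \<le> n" using wr H(2) by (simp add: r_def x_def)
    have lw: "log 2 r \<le> log 2 (real w)" using wr r0 by simp
    have lr: "log 2 r = log 2 lam + log 2 \<alpha> + \<beta> * L - log 2 L"
      using assms m0 L2 x0
      by (simp add: r_def m_def L_def log_divide log_mult log_powr)
    define B where "B = (1-\<beta>)*L + log 2 L + K"
    define T where "T = real w * (log 2 (exp 1) + L - log 2 (real w))"
    have "log 2 (exp 1) + L - log 2 (real w) \<le> B"
      using lw lr unfolding B_def K_def by (simp add: algebra_simps)
    hence "T \<le> real w * B" using T_def by (simp add: mult_left_mono)
    also have "\<dots> \<le> (r + 1) * B" using wr H(3) B_def by (simp add: mult_right_mono)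
    also have "(r + 1) * B = lam*(1-\<beta>)*m + (lam*m*(log 2 L + K)/L + (1-\<beta>)*L + log 2 L + K)"
      using L2 by (simp add: r_def B_def field_simps)
    also have "\<dots> \<le> lam*(1-\<beta>)*m + (d*m + 1)" using H(1) by simp
    also have "\<dots> = m + 1" by (simp add: d_def algebra_simps)
    finally have Tm: "T \<le> m + 1" .
    have wpos: "real w > 0" using w1 by simp
    have eq: "exp (real w) * (real n / real w)^w = 2 powr T"
    proof -
      have "ln (exp (real w) * (real n / real w)^w) = real w + real w * (ln x - ln (real w))"
        using wpos x0 by (simp add: ln_mult ln_realpow ln_div x_def)
      also have "\<dots> = T * ln 2" by (simp add: T_def L_def log_def field_simps)
      finally have lnT: "ln (exp (real w) * (real n / real w)^w) = T * ln 2" .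
      have "exp (real w) * (real n / real w)^w > 0" using wpos x0 by (simp add: x_def)
      hence "exp (real w) * (real n / real w)^w = exp (ln (exp (real w) * (real n / real w)^w))"
        by simp
      also have "\<dots> = 2 powr T" using lnT by (simp add: powr_def)
      finally show ?thesis .
    qed
    have bound: "(\<Sum>j=1..w. real (n choose j)) \<le> 2 powr (m + c) - 1"
    proof -
      have "(\<Sum>j=1..w. real (n choose j)) \<le> 2 powr T" using binom_bound[OF w1 wn] eq by simp
      also have "\<dots> \<le> 2 powr (m + c - 1)" using Tm assms by simp
      also have "\<dots> \<le> 2 powr (m + c) - 1"
      proof -
        have "1 \<le> 2 powr (m + c - 1)" using m0 assms by (intro ge_one_powr_ge_zero) auto
        moreover have "2 powr (m + c) = 2 * 2 powr (m + c - 1)"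
        proof -
          have "2 powr (m + c) = 2 powr (1 + (m + c - 1))" by simp
          also have "\<dots> = 2 powr 1 * 2 powr (m + c - 1)" by (rule powr_add)
          finally show ?thesis by simp
        qed
        ultimately show ?thesis by simp
      qed
      finally show ?thesis .
    qed
    define S where "S = {v::nat. (\<Sum>j=1..v. real (n choose j)) \<le> 2 powr (m + c) - 1}"
    have fin: "finite S"
    proof (rule finite_subset[of _ "{..n}"])
      show "S \<subseteq> {..n}"
      proof
        fix v assume v: "v \<in> S"
        show "v \<in> {..n}"
        proof (rule ccontr)
          assume "v \<notin> {..n}"
          hence "(\<Sum>j=1..v. real (n choose j)) = 2^n - 1" by (intro row_sum_ge) auto
          moreover have "2 powr (m + c) < 2 powr (real n)" using H(4) by (simp add: x_def)
          moreover have "2 powr (real n) = (2::real)^n" by (simp add: powr_realpow)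
          moreover have "(\<Sum>j=1..v. real (n choose j)) \<le> 2 powr (m + c) - 1" using v by (simp add: S_def)
          ultimately show False by linarith
        qed
      qed
    qed simp
    have "w \<in> S" using bound by (simp add: S_def)
    hence "w \<le> Max S" using fin by simp
    hence W: "real w \<le> real (wstar n (2 powr (m + c)))" unfolding wstar_def S_def by simp
    have R: "lam * m / log 2 (real n) = r" by (simp only: r_def L_def x_def)
    have M: "\<alpha> * real n powr \<beta> = m" by (simp only: m_def x_def)
    show "let m = \<alpha> * real n powr \<beta> in lam * m / log 2 (real n) \<le> real (wstar n (2 powr (m + c)))"
      unfolding Let_def M R using W wr(1) by linarith
  qed
qed


theorem corollary2:
  fixes \<alpha> \<beta> c :: real
  assumes "0 < \<alpha>" "\<alpha> < 1" "0 < \<beta>" "\<beta> < 1" "c \<ge> 2"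
  shows "\<forall>lam::real. lam < 1 / (1 - \<beta>) \<longrightarrow>
           (\<exists>N::real. N > 0 \<and>
              (\<forall>n::nat. real n > N \<longrightarrow>
                 (let m = \<alpha> * real n powr \<beta> in
                  lam * m / log 2 (real n) \<le> real (wstar n (2 powr (m + c))))))"
proof (intro allI impI)
  fix lam :: real assume lam: "lam < 1 / (1 - \<beta>)"
  show "\<exists>N::real. N > 0 \<and>
              (\<forall>n::nat. real n > N \<longrightarrow>
                 (let m = \<alpha> * real n powr \<beta> in
                  lam * m / log 2 (real n) \<le> real (wstar n (2 powr (m + c)))))"
  proof (cases "lam > 0")
    case True
    then show ?thesis using main_pos[OF assms True lam] by blast
  next
    case False
    show ?thesis
    proof (intro exI[of _ 1] conjI allI impI)
      fix n :: nat assume "real n > 1"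
      hence "log 2 (real n) > 0" by simp
      moreover have "\<alpha> * real n powr \<beta> \<ge> 0" using assms by simp
      ultimately have "lam * (\<alpha> * real n powr \<beta>) / log 2 (real n) \<le> 0"
        using False by (intro divide_nonpos_pos mult_nonpos_nonneg) auto
      moreover have "0 \<le> real (wstar n (2 powr (\<alpha> * real n powr \<beta> + c)))" by simp
      ultimately show "let m = \<alpha> * real n powr \<beta> in lam * m / log 2 (real n) \<le> real (wstar n (2 powr (m + c)))"
        unfolding Let_def by linarith
    qed simp
  qed
qed

end
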